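(* The subspace $K[SI[\infty]]$ of $K[\mathcal{T}[\infty]]$ spanned by sorted trees is a graded sub-$2$-associative Hopf algebra of $(K[\mathcal{T}[\infty]],\star,/,\Delta_{\mathrm s})$: it contains the one-node tree, is closed under both products $\star$ and $/$, and $\Delta_{\mathrm s}(K[SI[\infty]])\subseteq K[SI[\infty]]\otimes K[SI[\infty]]$.
   Context: $K$ is a field. A tree is a finite planar rooted tree, degree = number of non-root nodes, $\odot$ the one-node tree. An $n$--tree is a tree of degree $n$ whose non-root nodes are labelled bijectively by $\{1,\dots,n\}$; $\mathcal{T}[\infty]$ is the set of all $n$--trees. An increasing tree is an $n$--tree whose labels strictly increase along every path from the root; a sorted tree is an increasing tree in which, at every node, the labels of its children increase from left to right; $SI[\infty]$ is the set of sorted trees. Nodes $N(t)$ are ordered by depth-first post-order (subtrees left to right recursively, then the node; root maximal); write $u_1<\dots<u_n$ for non-root nodes. For a set $A$ of non-root nodes, $t_A$ is obtained by deleting non-root nodes outside $A$ (children attached in order to the parent in place of the deleted node), labels kept; $t_{[i,j]}=t_{\{u_h,\dots,u_k\}}$ if $i\le j$ and $[i,j]\cap[n]=[h,k]\ne\emptyset$, else $\odot$. Standardization $\mathrm s(t)$ relabels an $\mathbb N$-labelled tree with distinct labels by $1,\dots,|t|$ preserving relative order. $\Delta_{\mathrm s}(t)=\sum_{k=0}^n\mathrm s(t_{[1,k]})\otimes\mathrm s(t_{[k+1,n]})$. $w[m]$ adds $m$ to every label. Dot product $t\cdot w$: identify the roots, root-children of $t$ followed by those of $w$; $t/w=t\cdot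 w[|t|]$. A partition of $u$ of degree $n\ge1$ is an ordered tuple $(u_{[n_0+1,n_1]},\dots,u_{[n_{k-1}+1,n_k]})$, $0=n_0<\dots<n_k=n$; for $P=(u_1,\dots,u_k)$, $I(P,t)$ is the set of maps $f$ from blocks to $N(t)$ with $f(u_1)<\dots<f(u_k)$; $t\#_{P,f}u$ identifies the root of each $u_i$ with $f(u_i)$, the root-children of $u_i$ becoming children of $f(u_i)$ to the right of its original children, labels kept; $t* u=\sum_{P,f}t\#_{P,f}u$ ($|u|\ge1$), $t*\odot=t$; $t\star w=t* w[|t|]$. *)

theory Defs
  imports Main
begin

text \<open>A tree (with unlabelled root) is represented by the ordered list of the subtrees
  hanging from its root; the one-node tree is the empty list.\<close>

datatype ltree = LN nat "ltree list"

type_synonym tree = "ltree list"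

fun lab :: "ltree \<Rightarrow> nat" where
  "lab (LN a cs) = a"

fun nn :: "ltree \<Rightarrow> nat" where
  "nn (LN a cs) = Suc (sum_list (map nn cs))"

fun post :: "ltree \<Rightarrow> nat list" where
  "post (LN a cs) = concat (map post cs) @ [a]"

definition labels :: "tree \<Rightarrow> nat list" where
  "labels t = concat (map post t)"

text \<open>Degree = number of non-root nodes.\<close>
definition deg :: "tree \<Rightarrow> nat" where
  "deg t = length (labels t)"

fun maplab :: "(nat \<Rightarrow> nat) \<Rightarrow> ltree \<Rightarrow> ltree" where
  "maplab g (LN a cs) = LN (g a) (map (maplab g) cs)"

definition is_ntree :: "tree \<Rightarrow> bool" where
  "is_ntree t \<longleftrightarrow> distinct (labels t) \<and> set (labels t) = {1..deg t}"

definition Tinf :: "tree set" where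
  "Tinf = {t. is_ntree t}"

fun incr :: "ltree \<Rightarrow> bool" where
  "incr (LN a cs) \<longleftrightarrow> (\<forall>c\<in>set cs. \<forall>b\<in>set (post c). a < b) \<and> (\<forall>c\<in>set cs. incr c)"

fun sorted_kids :: "ltree \<Rightarrow> bool" where
  "sorted_kids (LN a cs) \<longleftrightarrow> sorted_wrt (<) (map lab cs) \<and> (\<forall>c\<in>set cs. sorted_kids c)"

definition increasing_tree :: "tree \<Rightarrow> bool" where
  "increasing_tree t \<longleftrightarrow> is_ntree t \<and> (\<forall>c\<in>set t. incr c)"

definition sorted_tree :: "tree \<Rightarrow> bool" where
  "sorted_tree t \<longleftrightarrow> increasing_tree t \<and> sorted_wrt (<) (map lab t) \<and> (\<forall>c\<in>set t. sorted_kids c)"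

definition SIinf :: "tree set" where
  "SIinf = {t. sorted_tree t}"

text \<open>Nodes are identified with their positions in depth-first post-order:
  the non-root nodes of a tree of degree n are positions 1..n, the root is n+1.
  In the functions below, off is the number of nodes preceding the current subtree
  in post-order.\<close>

text \<open>Restriction t_A: keep non-root nodes whose position satisfies P, children of
  deleted nodes are attached, in order, to the parent in place of the deleted node.\<close>
fun restrT :: "(nat \<Rightarrow> bool) \<Rightarrow> nat \<Rightarrow> ltree \<Rightarrow> ltree list"
and restrF :: "(nat \<Rightarrow> bool) \<Rightarrow> nat \<Rightarrow> ltree list \<Rightarrow> ltree list" where
  "restrT P off (LN a cs) =
     (if P (off + nn (LN a cs)) then [LN a (restrF P off cs)] else restrF P off cs)"
| "restrF P off [] = []"
| "restrF P off (c # cs) = restrT P off c @ restrF P (off + nn c) cs"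

definition restrict :: "nat set \<Rightarrow> tree \<Rightarrow> tree" where
  "restrict A t = restrF (\<lambda>p. p \<in> A) 0 t"

text \<open>t_[i,j]: restriction to the nodes u_i,...,u_j (empty range gives the one-node tree).\<close>
definition interval :: "tree \<Rightarrow> nat \<Rightarrow> nat \<Rightarrow> tree" where
  "interval t i j = restrict {i..j} t"

definition std :: "tree \<Rightarrow> tree" where
  "std t = map (maplab (\<lambda>a. card {b \<in> set (labels t). b \<le> a})) t"

definition shift :: "tree \<Rightarrow> nat \<Rightarrow> tree" where
  "shift w m = map (maplab (\<lambda>a. a + m)) w"

fun graftT :: "(nat \<Rightarrow> ltree list) \<Rightarrow> nat \<Rightarrow> ltree \<Rightarrow> ltree"
and graftF :: "(nat \<Rightarrow> ltree list) \<Rightarrow> nat \<Rightarrow> ltree list \<Rightarrow> ltree list" where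
  "graftT g off (LN a cs) = LN a (graftF g off cs @ g (off + nn (LN a cs)))"
| "graftF g off [] = []"
| "graftF g off (c # cs) = graftT g off c # graftF g (off + nn c) cs"

definition graft :: "(nat \<Rightarrow> ltree list) \<Rightarrow> tree \<Rightarrow> tree" where
  "graft g t = graftF g 0 t @ g (Suc (deg t))"

text \<open>A partition of u (degree n \<ge> 1) is given by the cut list [n_1,...,n_k] with
  0 < n_1 < ... < n_k = n; its i-th block (0-based) is u_[n_{i-1}+1, n_i].\<close>
definition cuts_ok :: "nat \<Rightarrow> nat list \<Rightarrow> bool" where
  "cuts_ok n cs \<longleftrightarrow> cs \<noteq> [] \<and> sorted_wrt (<) (0 # cs) \<and> last cs = n"

definition block :: "tree \<Rightarrow> nat list \<Rightarrow> nat \<Rightarrow> tree" where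
  "block u cs i = interval u (Suc ((0 # cs) ! i)) (cs ! i)"

text \<open>f is given by the strictly increasing list ps of images f(u_1) < ... < f(u_k),
  positions in N(t) = {1..|t|+1}.\<close>
definition graft_at :: "tree \<Rightarrow> tree \<Rightarrow> nat list \<Rightarrow> nat list \<Rightarrow> tree" where
  "graft_at t u cs ps =
     graft (\<lambda>p. concat (map (\<lambda>i. if ps ! i = p then block u cs i else []) [0..<length ps])) t"

text \<open>Elements of K[T] are finitely supported functions tree \<Rightarrow> K;
  K[T] \<otimes> K[T] is identified with finitely supported functions on pairs.\<close>

definition supp :: "('a \<Rightarrow> 'k::zero) \<Rightarrow> 'a set" where
  "supp x = {a. x a \<noteq> 0}"

definition single :: "'a \<Rightarrow> 'a \<Rightarrow> 'k::{zero,one}" where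
  "single a = (\<lambda>b. if b = a then 1 else 0)"

definition span_of :: "'a set \<Rightarrow> ('a \<Rightarrow> 'k::zero) set" where
  "span_of B = {x. finite (supp x) \<and> supp x \<subseteq> B}"

text \<open>The product t * u on basis trees (sum over partitions P and maps f).\<close>
definition graft_prod :: "tree \<Rightarrow> tree \<Rightarrow> tree \<Rightarrow> 'k::field" where
  "graft_prod t u =
     (if u = [] then single t
      else (\<lambda>s. of_nat (card {(cs, ps). cuts_ok (deg u) cs \<and> length ps = length cs
                \<and> sorted_wrt (<) ps \<and> set ps \<subseteq> {1..Suc (deg t)}
                \<and> graft_at t u cs ps = s})))"

definition star_tree :: "tree \<Rightarrow> tree \<Rightarrow> tree \<Rightarrow> 'k::field" where
  "star_tree t w = graft_prod t (shift w (deg t))"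

definition slash_tree :: "tree \<Rightarrow> tree \<Rightarrow> tree \<Rightarrow> 'k::field" where
  "slash_tree t w = single (t @ shift w (deg t))"

definition delta_tree :: "tree \<Rightarrow> tree \<times> tree \<Rightarrow> 'k::field" where
  "delta_tree t = (\<lambda>pq. \<Sum>k\<in>{0..deg t}.
       single (std (interval t 1 k), std (interval t (Suc k) (deg t))) pq)"

definition bilin :: "('a \<Rightarrow> 'a \<Rightarrow> 'b \<Rightarrow> 'k::field) \<Rightarrow> ('a \<Rightarrow> 'k) \<Rightarrow> ('a \<Rightarrow> 'k) \<Rightarrow> 'b \<Rightarrow> 'k" where
  "bilin F x y = (\<lambda>s. \<Sum>a\<in>supp x. \<Sum>b\<in>supp y. x a * y b * F a b s)"

definition lin :: "('a \<Rightarrow> 'b \<Rightarrow> 'k::field) \<Rightarrow> ('a \<Rightarrow> 'k) \<Rightarrow> 'b \<Rightarrow> 'k" where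
  "lin F x = (\<lambda>s. \<Sum>a\<in>supp x. x a * F a s)"

definition star :: "(tree \<Rightarrow> 'k::field) \<Rightarrow> (tree \<Rightarrow> 'k) \<Rightarrow> tree \<Rightarrow> 'k" where
  "star = bilin star_tree"

definition slash :: "(tree \<Rightarrow> 'k::field) \<Rightarrow> (tree \<Rightarrow> 'k) \<Rightarrow> tree \<Rightarrow> 'k" where
  "slash = bilin slash_tree"

definition Delta_s :: "(tree \<Rightarrow> 'k::field) \<Rightarrow> tree \<times> tree \<Rightarrow> 'k" where
  "Delta_s = lin delta_tree"

end

theory Submission
  imports Defs
begin


declare upt_Suc[simp del]

definition goodF :: "tree \<Rightarrow> bool" where
  "goodF cs \<longleftrightarrow> sorted_wrt (<) (map lab cs) \<and> (\<forall>c\<in>set cs. incr c \<and> sorted_kids c)"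

lemma labels_Nil[simp]: "labels [] = []" by (simp add: labels_def)
lemma labels_Cons[simp]: "labels (c # cs) = post c @ labels cs" by (simp add: labels_def)
lemma labels_append[simp]: "labels (xs @ ys) = labels xs @ labels ys" by (simp add: labels_def)
lemma labels_concat: "labels (concat xss) = concat (map labels xss)" by (induct xss) auto

lemma post_LN: "post (LN a cs) = labels cs @ [a]" by (simp add: labels_def)
declare post.simps[simp del]

lemma post_ne[simp]: "post c \<noteq> []" by (cases c) (simp add: post_LN)
lemma labels_Nil_iff[simp]: "labels F = [] \<longleftrightarrow> F = []" by (cases F) auto

lemma nn_post: "nn c = length (post c)"
proof (induction c)
  case (LN a cs)
  have "sum_list (map nn cs) = length (labels cs)" using LN
    by (induct cs) auto
  then show ?case by (simp add: post_LN)
qed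

lemma incr_ge: "incr c \<Longrightarrow> b \<in> set (post c) \<Longrightarrow> lab c \<le> b"
  by (cases c) (fastforce simp: post_LN labels_def)

lemma goodF_append: "goodF (xs @ ys) \<longleftrightarrow> goodF xs \<and> goodF ys \<and> (\<forall>x\<in>set xs. \<forall>y\<in>set ys. lab x < lab y)"
  by (auto simp: goodF_def sorted_wrt_append)

lemma goodF_Nil[simp]: "goodF []" by (simp add: goodF_def)

lemma restr_labels:
 "labels (restrT P off c) = map fst (filter (P \<circ> snd) (zip (post c) [Suc off..<Suc off + length (post c)]))"
 "labels (restrF P off cs) = map fst (filter (P \<circ> snd) (zip (labels cs) [Suc off..<Suc off + length (labels cs)]))"
proof (induction P off c and P off cs rule: restrT_restrF.induct)
  case (1 P off a cs)
  have u: "[Suc off..<Suc off + length (labels cs @ [a])] = [Suc off..<Suc off + length (labels cs)] @ [Suc off + length (labels cs)]"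
    by (simp add: upt_Suc)
  have n: "off + nn (LN a cs) = Suc off + length (labels cs)"
    by (simp add: nn_post post_LN)
  have z: "zip (labels cs @ [a]) ([Suc off..<Suc off + length (labels cs)] @ [Suc off + length (labels cs)])
     = zip (labels cs) [Suc off..<Suc off + length (labels cs)] @ [(a, Suc off + length (labels cs))]"
    by (simp del: upt_Suc upt_Suc_append)
  show ?case using 1 unfolding restrT.simps n post_LN u z
    by (simp del: upt_Suc upt_Suc_append add: post_LN)
next
  case (2 P off)
  then show ?case by simp
next
  case (3 P off c cs)
  have u: "[Suc off..<Suc off + length (post c @ labels cs)] = [Suc off..<Suc off + length (post c)] @ [Suc (off + nn c)..<Suc (off + nn c) + length (labels cs)]"
  proof -
    have "[Suc off..<Suc off + length (post c) + length (labels cs)] = [Suc off..<Suc off + length (post c)] @ [Suc off + length (post c)..<Suc off + length (post c) + length (labels cs)]"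
      by (rule upt_add_eq_append) simp
    then show ?thesis by (simp add: nn_post add.assoc del: upt_Suc upt_Suc_append)
  qed
  show ?case using 3 unfolding restrF.simps labels_Cons u
    by (simp add: nn_post)
qed

lemma set_fst_filter_zip: "set (map fst (filter Q (zip xs ys))) \<subseteq> set xs"
  by (auto dest: set_zip_leftD)

lemma distinct_fst_filter_zip: "distinct xs \<Longrightarrow> distinct (map fst (filter Q (zip xs ys)))"
proof (induction xs arbitrary: ys)
  case Nil then show ?case by simp
next
  case (Cons x xs)
  show ?case
  proof (cases ys)
    case Nil then show ?thesis by simp
  next
    case (Cons y ys')
    have "set (map fst (filter Q (zip xs ys'))) \<subseteq> set xs" by (rule set_fst_filter_zip)
    then show ?thesis using Cons.prems Cons.IH[of ys'] \<open>ys = y # ys'\<close> by auto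
  qed
qed

lemma restrT_set: "set (labels (restrT P off c)) \<subseteq> set (post c)"
  unfolding restr_labels by (rule set_fst_filter_zip)
lemma restrF_set: "set (labels (restrF P off cs)) \<subseteq> set (labels cs)"
  unfolding restr_labels by (rule set_fst_filter_zip)
lemma restrF_distinct: "distinct (labels cs) \<Longrightarrow> distinct (labels (restrF P off cs))"
  unfolding restr_labels by (rule distinct_fst_filter_zip)

lemma restrT_ne: "restrT P off c \<noteq> [] \<Longrightarrow> \<exists>p. off < p \<and> p \<le> off + nn c \<and> P p"
proof -
  assume "restrT P off c \<noteq> []"
  then have "labels (restrT P off c) \<noteq> []" by simp
  then obtain l q where "(l, q) \<in> set (zip (post c) [Suc off..<Suc off + length (post c)])" "P q"
    unfolding restr_labels by (fastforce simp: filter_empty_conv)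
  then have "q \<in> set [Suc off..<Suc off + length (post c)]" by (blast dest: set_zip_rightD)
  then show ?thesis using \<open>P q\<close> by (auto simp: nn_post intro!: exI[of _ q])
qed

lemma restrF_empty: "(\<forall>p. off < p \<longrightarrow> \<not> P p) \<Longrightarrow> restrF P off cs = []"
proof -
  assume a: "\<forall>p. off < p \<longrightarrow> \<not> P p"
  have "labels (restrF P off cs) = []" unfolding restr_labels
    using a by (auto simp: filter_empty_conv dest!: set_zip_rightD)
  then show ?thesis by simp
qed

lemma lab_post: "lab d \<in> set (post d)" by (cases d) (simp add: post_LN)

lemma lab_labels: "d \<in> set F \<Longrightarrow> lab d \<in> set (labels F)"
  using lab_post by (auto simp: labels_def)

definition convex :: "(nat \<Rightarrow> bool) \<Rightarrow> bool" where
  "convex P \<longleftrightarrow> (\<forall>p q r. p < q \<longrightarrow> q < r \<longrightarrow> P p \<longrightarrow> P r \<longrightarrow> P q)"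

lemma labels_gt: "\<forall>c\<in>set cs. \<forall>b\<in>set (post c). a < b \<Longrightarrow> b \<in> set (labels cs) \<Longrightarrow> a < b"
  by (auto simp: labels_def)

lemma restr_good:
 "convex P \<Longrightarrow> incr c \<and> sorted_kids c \<longrightarrow> goodF (restrT P off c)"
 "convex P \<Longrightarrow> goodF cs \<longrightarrow> goodF (restrF P off cs)"
proof (induction P off c and P off cs rule: restrT_restrF.induct)
  case (1 P off a cs)
  show ?case
  proof
    assume h: "incr (LN a cs) \<and> sorted_kids (LN a cs)"
    then have gc: "goodF cs" by (auto simp: goodF_def)
    with 1 have gR: "goodF (restrF P off cs)" by blast
    have gt: "\<forall>b\<in>set (labels (restrF P off cs)). a < b"
      using restrF_set[of P off cs] h labels_gt[of cs a] by auto
    have "goodF [LN a (restrF P off cs)]"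
      using gR gt by (auto simp: goodF_def labels_def)
    then show "goodF (restrT P off (LN a cs))" using gR by simp
  qed
next
  case (2 P off) then show ?case by simp
next
  case (3 P off c cs)
  show ?case
  proof
    assume g: "goodF (c # cs)"
    then have gc: "incr c \<and> sorted_kids c" and gcs: "goodF cs" and lt: "\<forall>d\<in>set cs. lab c < lab d"
      by (auto simp: goodF_def)
    have g1: "goodF (restrT P off c)" using 3 gc by blast
    have g2: "goodF (restrF P (off + nn c) cs)" using 3 gcs by blast
    have cross: "\<forall>x\<in>set (restrT P off c). \<forall>y\<in>set (restrF P (off + nn c) cs). lab x < lab y"
    proof (cases "P (off + nn c)")
      case True
      obtain a ks where c: "c = LN a ks" by (cases c)
      have "\<forall>y\<in>set (restrF P (off + nn c) cs). lab c < lab y"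
      proof
        fix y assume "y \<in> set (restrF P (off + nn c) cs)"
        then have "lab y \<in> set (labels cs)" using lab_labels restrF_set by blast
        then obtain d where "d \<in> set cs" "lab y \<in> set (post d)" by (auto simp: labels_def)
        then show "lab c < lab y" using lt gcs incr_ge[of d "lab y"] by (force simp: goodF_def)
      qed
      then show ?thesis using True c by simp
    next
      case False
      show ?thesis
      proof (cases "restrT P off c = []")
        case True then show ?thesis by simp
      next
        case ne: False
        then obtain p where p: "off < p" "p \<le> off + nn c" "P p" using restrT_ne by blast
        with False have "p < off + nn c" using le_neq_implies_less by blast
        then have "\<forall>r. off + nn c < r \<longrightarrow> \<not> P r"
          using 3(3) p(3) False unfolding convex_def by blast
        then have "restrF P (off + nn c) cs = []" by (rule restrF_empty)
        then show ?thesis by simp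
      qed
    qed
    show "goodF (restrF P off (c # cs))" using g1 g2 cross by (simp add: goodF_append)
  qed
qed

lemma post_maplab: "post (maplab g c) = map g (post c)"
proof (induction c)
  case (LN a cs)
  have "labels (map (maplab g) cs) = map g (labels cs)" using LN by (induct cs) auto
  then show ?case by (simp add: post_LN)
qed

lemma labels_maplab: "labels (map (maplab g) t) = map g (labels t)"
  by (induct t) (auto simp: post_maplab)

lemma lab_maplab[simp]: "lab (maplab g c) = g (lab c)" by (cases c) simp

definition smono :: "nat set \<Rightarrow> (nat \<Rightarrow> nat) \<Rightarrow> bool" where
  "smono S g \<longleftrightarrow> (\<forall>a\<in>S. \<forall>b\<in>S. a < b \<longrightarrow> g a < g b)"

lemma maplab_tree: "smono S g \<Longrightarrow> set (post c) \<subseteq> S \<Longrightarrow> incr c \<Longrightarrow> sorted_kids c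
   \<Longrightarrow> incr (maplab g c) \<and> sorted_kids (maplab g c)"
proof (induction c)
  case (LN a cs)
  have S: "a \<in> S" "\<And>k b. k \<in> set cs \<Longrightarrow> b \<in> set (post k) \<Longrightarrow> b \<in> S"
    using LN.prems(2) by (auto simp: post_LN labels_def)
  have "\<forall>k\<in>set (map (maplab g) cs). \<forall>b\<in>set (post k). g a < b"
  proof (intro ballI)
    fix k b assume "k \<in> set (map (maplab g) cs)" "b \<in> set (post k)"
    then obtain k0 b0 where "k0 \<in> set cs" "b0 \<in> set (post k0)" "b = g b0"
      by (auto simp: post_maplab)
    moreover have "a < b0" using LN.prems(3) \<open>k0 \<in> set cs\<close> \<open>b0 \<in> set (post k0)\<close> by auto
    ultimately show "g a < b" using LN.prems(1) S unfolding smono_def by blast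
  qed
  moreover have "\<forall>k\<in>set cs. incr (maplab g k) \<and> sorted_kids (maplab g k)"
  proof
    fix k assume k: "k \<in> set cs"
    have "set (post k) \<subseteq> S" using S(2)[OF k] by blast
    then show "incr (maplab g k) \<and> sorted_kids (maplab g k)"
      using LN.IH[OF k LN.prems(1)] LN.prems(3,4) k by auto
  qed
  moreover have "sorted_wrt (<) (map (\<lambda>k. g (lab k)) cs)"
  proof -
    have "sorted_wrt (\<lambda>x y. lab x < lab y) cs" using LN.prems(4) by (simp add: sorted_wrt_map)
    then have "sorted_wrt (\<lambda>x y. g (lab x) < g (lab y)) cs"
      by (rule sorted_wrt_mono_rel[rotated])
         (use LN.prems(1) S(2) lab_post in \<open>unfold smono_def, blast\<close>)
    then show ?thesis by (simp add: sorted_wrt_map)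
  qed
  ultimately show ?case by (simp add: o_def)
qed

lemma goodF_map: "smono (set (labels t)) g \<Longrightarrow> goodF t \<Longrightarrow> goodF (map (maplab g) t)"
proof -
  assume m: "smono (set (labels t)) g" and g: "goodF t"
  have sub: "\<And>k. k \<in> set t \<Longrightarrow> set (post k) \<subseteq> set (labels t)" by (auto simp: labels_def)
  have "sorted_wrt (\<lambda>x y. lab x < lab y) t" using g by (simp add: goodF_def sorted_wrt_map)
  then have "sorted_wrt (\<lambda>x y. g (lab x) < g (lab y)) t"
    by (rule sorted_wrt_mono_rel[rotated]) (use m sub lab_post in \<open>unfold smono_def, blast\<close>)
  moreover have "\<forall>k\<in>set t. incr (maplab g k) \<and> sorted_kids (maplab g k)"
    using maplab_tree[OF m sub] g by (auto simp: goodF_def)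
  ultimately show ?thesis by (simp add: goodF_def sorted_wrt_map o_def)
qed

lemma sorted_tree_iff: "sorted_tree t \<longleftrightarrow> is_ntree t \<and> goodF t"
  by (auto simp: sorted_tree_def increasing_tree_def goodF_def)

definition rank :: "nat list \<Rightarrow> nat \<Rightarrow> nat" where
  "rank L a = card {b \<in> set L. b \<le> a}"

lemma std_eq: "std t = map (maplab (rank (labels t))) t"
  unfolding std_def rank_def by (rule refl)

lemma rank_smono: "smono (set L) (rank L)"
  unfolding smono_def rank_def
proof (intro ballI impI)
  fix a b assume "a \<in> set L" "b \<in> set L" "a < b"
  then show "card {x \<in> set L. x \<le> a} < card {x \<in> set L. x \<le> b}"
  proof (intro psubset_card_mono)
    have "{x \<in> set L. x \<le> a} \<subseteq> {x \<in> set L. x \<le> b}" using \<open>a < b\<close> by auto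
    moreover have "b \<in> {x \<in> set L. x \<le> b}" "b \<notin> {x \<in> set L. x \<le> a}"
      using \<open>a < b\<close> \<open>b \<in> set L\<close> by auto
    ultimately show "{x \<in> set L. x \<le> a} \<subset> {x \<in> set L. x \<le> b}" by blast
  qed auto
qed

lemma rank_image: "distinct L \<Longrightarrow> rank L ` set L = {1..length L}"
proof -
  assume d: "distinct L"
  have sub: "rank L ` set L \<subseteq> {1..length L}"
  proof
    fix x assume "x \<in> rank L ` set L"
    then obtain a where a: "a \<in> set L" "x = rank L a" by auto
    have "card {b \<in> set L. b \<le> a} \<le> card (set L)" by (rule card_mono) auto
    moreover have "0 < card {b \<in> set L. b \<le> a}" using a by (subst card_gt_0_iff) auto
    ultimately have "1 \<le> x" "x \<le> length L" using a d unfolding rank_def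
      by (simp_all add: distinct_card)
    then show "x \<in> {1..length L}" by simp
  qed
  have "inj_on (rank L) (set L)"
    using rank_smono[of L] unfolding smono_def inj_on_def by (metis linorder_neqE_nat less_irrefl)
  then have "card (rank L ` set L) = length L" using d by (simp add: card_image distinct_card)
  then show ?thesis using sub by (intro card_subset_eq) auto
qed

lemma std_sorted: "distinct (labels t) \<Longrightarrow> goodF t \<Longrightarrow> sorted_tree (std t)"
proof -
  assume d: "distinct (labels t)" and g: "goodF t"
  have L: "labels (std t) = map (rank (labels t)) (labels t)" by (simp add: std_eq labels_maplab)
  have inj: "inj_on (rank (labels t)) (set (labels t))"
    using rank_smono[of "labels t"] unfolding smono_def inj_on_def by (metis linorder_neqE_nat less_irrefl)
  have "is_ntree (std t)" unfolding is_ntree_def deg_def L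
    using d inj rank_image[OF d] by (simp add: distinct_map)
  moreover have "goodF (std t)" unfolding std_eq by (rule goodF_map[OF rank_smono g])
  ultimately show ?thesis by (simp add: sorted_tree_iff)
qed

lemma interval_sorted: "sorted_tree t \<Longrightarrow> sorted_tree (std (interval t i j))"
proof -
  assume s: "sorted_tree t"
  have c: "convex (\<lambda>p. p \<in> {i..j})" by (auto simp: convex_def)
  show ?thesis unfolding interval_def restrict_def
    using s restr_good(2)[OF c] restrF_distinct
    by (intro std_sorted) (auto simp: sorted_tree_iff is_ntree_def)
qed



lemma labels_shift: "labels (shift w m) = map (\<lambda>a. a + m) (labels w)"
  by (simp add: shift_def labels_maplab)

lemma deg_shift[simp]: "deg (shift w m) = deg w" by (simp add: deg_def labels_shift)

lemma goodF_shift: "goodF w \<Longrightarrow> goodF (shift w m)"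
  unfolding shift_def by (rule goodF_map) (auto simp: smono_def)

lemma ntree_set: "is_ntree t \<Longrightarrow> set (labels t) = {1..deg t}" by (simp add: is_ntree_def)

lemma slash_sorted: "sorted_tree t \<Longrightarrow> sorted_tree w \<Longrightarrow> sorted_tree (t @ shift w (deg t))"
proof -
  assume st: "sorted_tree t" and sw: "sorted_tree w"
  have Lt: "set (labels t) = {1..deg t}" "distinct (labels t)" and gt: "goodF t"
    using st by (auto simp: sorted_tree_iff is_ntree_def)
  have Lw: "set (labels w) = {1..deg w}" "distinct (labels w)" and gw: "goodF w"
    using sw by (auto simp: sorted_tree_iff is_ntree_def)
  have Ls: "set (labels (shift w (deg t))) = {deg t + 1..deg t + deg w}"
    unfolding labels_shift using Lw(1) by (auto simp: image_iff intro: bexI[of _ "_ - deg t"])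
  have ds: "distinct (labels (shift w (deg t)))" unfolding labels_shift using Lw(2)
    by (simp add: distinct_map inj_on_def)
  have "is_ntree (t @ shift w (deg t))" unfolding is_ntree_def
  proof
    show "distinct (labels (t @ shift w (deg t)))" using Lt Ls ds by auto
    have "deg (t @ shift w (deg t)) = deg t + deg w" by (simp add: deg_def labels_shift)
    then show "set (labels (t @ shift w (deg t))) = {1..deg (t @ shift w (deg t))}"
      using Lt(1) Ls by auto
  qed
  moreover have "goodF (t @ shift w (deg t))" unfolding goodF_append
  proof (intro conjI gt goodF_shift gw ballI)
    fix x y assume "x \<in> set t" "y \<in> set (shift w (deg t))"
    then have "lab x \<in> set (labels t)" "lab y \<in> set (labels (shift w (deg t)))" by (auto intro: lab_labels)
    then show "lab x < lab y" using Lt Ls by auto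
  qed
  ultimately show ?thesis by (simp add: sorted_tree_iff)
qed

lemma lab_graftT[simp]: "lab (graftT g off c) = lab c" by (cases c) simp
lemma map_lab_graftF[simp]: "map lab (graftF g off cs) = map lab cs"
  by (induct cs arbitrary: off) auto

lemma graft_labels:
  "set (post (graftT g off c)) = set (post c) \<union> (\<Union>p\<in>{Suc off..off + nn c}. set (labels (g p)))
   \<and> length (post (graftT g off c)) = length (post c) + (\<Sum>p\<in>{Suc off..off + nn c}. length (labels (g p)))"
  "set (labels (graftF g off cs)) = set (labels cs) \<union> (\<Union>p\<in>{Suc off..off + length (labels cs)}. set (labels (g p)))
   \<and> length (labels (graftF g off cs)) = length (labels cs) + (\<Sum>p\<in>{Suc off..off + length (labels cs)}. length (labels (g p)))"
proof (induction g off c and g off cs rule: graftT_graftF.induct)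
  case (1 g off a cs)
  let ?L = "length (labels cs)"
  have n: "off + nn (LN a cs) = Suc (off + ?L)" by (simp add: nn_post post_LN)
  have I: "{Suc off..Suc (off + ?L)} = insert (Suc (off + ?L)) {Suc off..off + ?L}"
    by auto
  have nI: "Suc (off + ?L) \<notin> {Suc off..off + ?L}" by simp
  have e: "graftT g off (LN a cs) = LN a (graftF g off cs @ g (Suc (off + ?L)))"
    by (simp only: graftT.simps n)
  have s1: "set (post (graftT g off (LN a cs))) = set (labels (graftF g off cs)) \<union> set (labels (g (Suc (off + ?L)))) \<union> {a}"
    unfolding e post_LN by simp
  have l1: "length (post (graftT g off (LN a cs))) = length (labels (graftF g off cs)) + length (labels (g (Suc (off + ?L)))) + 1"
    unfolding e post_LN by simp
  show ?case unfolding s1 l1 n I sum.insert[OF finite_atLeastAtMost nI] UN_insert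
    using 1 by (auto simp: post_LN)
next
  case (2 g off) then show ?case by simp
next
  case (3 g off c cs)
  have I: "{Suc off..off + length (labels (c # cs))} = {Suc off..off + nn c} \<union> {Suc (off + nn c)..off + nn c + length (labels cs)}"
    by (auto simp: nn_post)
  have D: "{Suc off..off + nn c} \<inter> {Suc (off + nn c)..off + nn c + length (labels cs)} = {}" by auto
  have e: "labels (graftF g off (c # cs)) = post (graftT g off c) @ labels (graftF g (off + nn c) cs)" by simp
  show ?case unfolding e I UN_Un sum.union_disjoint[OF finite_atLeastAtMost finite_atLeastAtMost D]
    using 3 by auto
qed

lemma incr_LN: "goodF F \<Longrightarrow> (\<forall>b\<in>set (labels F). a < b) \<Longrightarrow> incr (LN a F) \<and> sorted_kids (LN a F)"
  by (auto simp: goodF_def labels_def)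

lemma graft_good:
 "(\<forall>p. goodF (g p) \<and> (\<forall>l\<in>set (labels (g p)). M < l)) \<Longrightarrow>
    incr c \<and> sorted_kids c \<and> set (post c) \<subseteq> {..M} \<longrightarrow> incr (graftT g off c) \<and> sorted_kids (graftT g off c)"
 "(\<forall>p. goodF (g p) \<and> (\<forall>l\<in>set (labels (g p)). M < l)) \<Longrightarrow>
    goodF cs \<and> set (labels cs) \<subseteq> {..M} \<longrightarrow> goodF (graftF g off cs)"
proof (induction g off c and g off cs rule: graftT_graftF.induct)
  case (1 g off a cs)
  show ?case
  proof
    assume h: "incr (LN a cs) \<and> sorted_kids (LN a cs) \<and> set (post (LN a cs)) \<subseteq> {..M}"
    let ?q = "off + nn (LN a cs)"
    have gc: "goodF cs" "set (labels cs) \<subseteq> {..M}" "a \<le> M" using h by (auto simp: goodF_def post_LN)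
    have g1: "goodF (graftF g off cs)" using 1 gc by blast
    have g2: "goodF (g ?q)" and g2': "\<forall>l\<in>set (labels (g ?q)). M < l" using 1(2) by auto
    have "goodF (graftF g off cs @ g ?q)" unfolding goodF_append
    proof (intro conjI g1 g2 ballI)
      fix x y assume "x \<in> set (graftF g off cs)" "y \<in> set (g ?q)"
      then have hx: "lab x \<in> set (map lab cs)"
        by (metis image_eqI list.set_map map_lab_graftF)
      have "lab y \<in> set (labels (g ?q))" using \<open>y \<in> set (g ?q)\<close> by (rule lab_labels)
      moreover have "\<And>k. k \<in> set cs \<Longrightarrow> lab k \<le> M" using gc(2) lab_labels by fastforce
      ultimately show "lab x < lab y" using g2' hx by fastforce
    qed
    moreover have "\<forall>b\<in>set (labels (graftF g off cs @ g ?q)). a < b"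
    proof
      fix b assume "b \<in> set (labels (graftF g off cs @ g ?q))"
      then have "b \<in> set (labels cs) \<or> (\<exists>p. b \<in> set (labels (g p)))"
        using graft_labels(2)[of g off cs] by auto
      then show "a < b"
      proof
        assume "b \<in> set (labels cs)"
        moreover have "\<forall>c\<in>set cs. \<forall>b\<in>set (post c). a < b" using h by simp
        ultimately show "a < b" using labels_gt[of cs a b] by blast
      next
        assume "\<exists>p. b \<in> set (labels (g p))"
        then obtain p where "b \<in> set (labels (g p))" by blast
        then have "M < b" using 1(2) by blast
        then show "a < b" using gc(3) by simp
      qed
    qed
    ultimately show "incr (graftT g off (LN a cs)) \<and> sorted_kids (graftT g off (LN a cs))"
      unfolding graftT.simps by (rule incr_LN)
  qed
next
  case (2 g off) then show ?case by simp
next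
  case (3 g off c cs)
  show ?case
  proof
    assume h: "goodF (c # cs) \<and> set (labels (c # cs)) \<subseteq> {..M}"
    have hc: "incr c" "sorted_kids c" "goodF cs" "\<forall>d\<in>set cs. lab c < lab d"
      using h by (simp_all add: goodF_def)
    have hs: "set (post c) \<subseteq> {..M}" "set (labels cs) \<subseteq> {..M}" using h by simp_all
    have a: "incr (graftT g off c) \<and> sorted_kids (graftT g off c)"
      using 3(1)[OF 3(3)] hc hs by blast
    have b: "goodF (graftF g (off + nn c) cs)" using 3(2)[OF 3(3)] hc hs by blast
    have e: "graftF g off (c # cs) = graftT g off c # graftF g (off + nn c) cs" by simp
    have sl: "sorted_wrt (<) (lab c # map lab cs)" using h by (simp add: goodF_def)
    show "goodF (graftF g off (c # cs))" unfolding e goodF_def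
      using a b sl by (simp add: goodF_def)
  qed
qed



lemma filter_zip_len: "length xs = length ys \<Longrightarrow> length (filter (Q \<circ> snd) (zip xs ys)) = length (filter Q ys)"
  by (induct xs ys rule: list_induct2) auto

lemma filter_len: "length L = n \<Longrightarrow> length (filter (Q \<circ> snd) (zip L [Suc 0..<Suc 0 + n])) = card {p\<in>{1..n}. Q p}"
proof -
  assume "length L = n"
  then have "length (filter (Q \<circ> snd) (zip L [Suc 0..<Suc 0 + n])) = length (filter Q [Suc 0..<Suc 0 + n])"
    by (intro filter_zip_len) simp
  also have "\<dots> = card ({x. Q x} \<inter> set [Suc 0..<Suc 0 + n])" by (rule distinct_length_filter) simp
  also have "{x. Q x} \<inter> set [Suc 0..<Suc 0 + n] = {p\<in>{1..n}. Q p}" by auto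
  finally show ?thesis .
qed

lemma filter_set: "length L = n \<Longrightarrow> x \<in> set (map fst (filter (Q \<circ> snd) (zip L [Suc 0..<Suc 0 + n])))
   \<longleftrightarrow> (\<exists>i<n. Q (Suc i) \<and> x = L ! i)"
proof -
  assume l: "length L = n"
  have "x \<in> set (map fst (filter (Q \<circ> snd) (zip L [Suc 0..<Suc 0 + n])))
     \<longleftrightarrow> (\<exists>y. (x, y) \<in> set (zip L [Suc 0..<Suc 0 + n]) \<and> Q y)" by force
  also have "\<dots> \<longleftrightarrow> (\<exists>i<n. Q (Suc i) \<and> x = L ! i)"
    using l by (auto simp: set_zip)
  finally show ?thesis .
qed

lemma interval_labels: "labels (interval u a b) =
   map fst (filter ((\<lambda>p. p \<in> {a..b}) \<circ> snd) (zip (labels u) [Suc 0..<Suc 0 + length (labels u)]))"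
  unfolding interval_def restrict_def restr_labels by simp

lemma interval_len: "b \<le> deg u \<Longrightarrow> length (labels (interval u (Suc a) b)) = b - a"
proof -
  assume b: "b \<le> deg u"
  have "length (labels (interval u (Suc a) b)) = card {p\<in>{1..deg u}. p \<in> {Suc a..b}}"
    unfolding interval_labels length_map deg_def by (rule filter_len) simp
  also have "{p\<in>{1..deg u}. p \<in> {Suc a..b}} = {Suc a..b}" using b by auto
  finally show ?thesis by simp
qed

lemma interval_set: "x \<in> set (labels (interval u a b)) \<longleftrightarrow> (\<exists>i<deg u. a \<le> Suc i \<and> Suc i \<le> b \<and> x = labels u ! i)"
  unfolding interval_labels by (subst filter_set) (auto simp: deg_def)

lemma interval_good: "goodF u \<Longrightarrow> goodF (interval u a b)"
proof -
  assume "goodF u"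
  moreover have "convex (\<lambda>p. p \<in> {a..b})" by (auto simp: convex_def)
  ultimately show ?thesis unfolding interval_def restrict_def using restr_good(2) by blast
qed

lemma telescope: fixes c :: "nat \<Rightarrow> nat" shows "(\<forall>i<k. c i \<le> c (Suc i)) \<Longrightarrow> (\<Sum>i<k. c (Suc i) - c i) = c k - c 0 \<and> c 0 \<le> c k"
proof (induct k)
  case 0 then show ?case by simp
next
  case (Suc k)
  then have h: "(\<Sum>i<k. c (Suc i) - c i) = c k - c 0" "c 0 \<le> c k" "c k \<le> c (Suc k)" by auto
  then show ?case by simp
qed

lemma cover: fixes c :: "nat \<Rightarrow> nat" shows "c 0 < p \<Longrightarrow> p \<le> c m \<Longrightarrow> \<exists>i<m. c i < p \<and> p \<le> c (Suc i)"
proof (induct m)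
  case 0 then show ?case by simp
next
  case (Suc m)
  show ?case
  proof (cases "p \<le> c m")
    case True then show ?thesis using Suc by (meson less_Suc_eq)
  next
    case False then show ?thesis using Suc by (intro exI[of _ m]) auto
  qed
qed

lemma gcases: "k \<le> length ps \<Longrightarrow> distinct ps \<Longrightarrow>
  concat (map (\<lambda>i. if ps ! i = p then B i else []) [0..<k]) = [] \<or>
  (\<exists>i<k. concat (map (\<lambda>i. if ps ! i = p then B i else []) [0..<k]) = B i)"
proof (induct k)
  case 0 then show ?case by simp
next
  case (Suc k)
  show ?case
  proof (cases "ps ! k = p")
    case True
    have "\<forall>i<k. ps ! i \<noteq> p" using Suc.prems True nth_eq_iff_index_eq by fastforce
    then have "concat (map (\<lambda>i. if ps ! i = p then B i else []) [0..<k]) = []" by auto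
    then show ?thesis using True by (auto simp: upt_Suc)
  next
    case False
    have e: "concat (map (\<lambda>i. if ps ! i = p then B i else []) [0..<Suc k])
       = concat (map (\<lambda>i. if ps ! i = p then B i else []) [0..<k])" using False by (simp add: upt_Suc)
    have "k \<le> length ps" using Suc.prems by simp
    from Suc.hyps[OF this Suc.prems(2)] show ?thesis unfolding e using less_SucI by blast
  qed
qed



lemma star_graft_sorted:
  assumes st: "sorted_tree t" and sw: "sorted_tree w" and u: "u = shift w (deg t)"
    and ok: "cuts_ok (deg u) cs" and len: "length ps = length cs" and sp: "sorted_wrt (<) ps"
    and rng: "set ps \<subseteq> {1..Suc (deg t)}"
  shows "sorted_tree (graft_at t u cs ps)"
proof -
  define k where "k = length cs"
  define n where "n = deg w"
  define c where "c j = (0 # cs) ! j" for j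
  define B where "B i = block u cs i" for i
  define g where "g p = concat (map (\<lambda>i. if ps ! i = p then B i else []) [0..<k])" for p
  have du: "deg u = n" using u by (simp add: n_def)
  have Bd: "B i = interval u (Suc (c i)) (c (Suc i))" for i
    by (simp add: B_def block_def c_def)
  have csne: "cs \<noteq> []" and ss: "sorted_wrt (<) (0 # cs)" and lst: "last cs = n"
    using ok du by (auto simp: cuts_ok_def)
  have c0: "c 0 = 0" by (simp add: c_def)
  have ck: "c k = n"
  proof -
    have "k = Suc (length cs - 1)" using csne by (simp add: k_def)
    then have "c k = cs ! (length cs - 1)" by (simp add: c_def)
    then show ?thesis using lst csne by (simp add: last_conv_nth)
  qed
  have cm: "c i < c j" if "i < j" "j \<le> k" for i j
    using sorted_wrt_nth_less[OF ss that(1)] that by (simp add: c_def k_def)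
  have cle: "c (Suc i) \<le> n" if "i < k" for i
    using cm[of "Suc i" k] ck that by (cases "Suc i = k") auto
  have Lt: "set (labels t) = {1..deg t}" "distinct (labels t)" and gt: "goodF t"
    using st by (auto simp: sorted_tree_iff is_ntree_def)
  have Lw: "set (labels w) = {1..n}" and gw: "goodF w"
    using sw by (auto simp: sorted_tree_iff is_ntree_def n_def)
  have Lu: "set (labels u) = {deg t + 1..deg t + n}"
    unfolding u labels_shift using Lw by (auto simp: image_iff intro: bexI[of _ "_ - deg t"])
  have gu: "goodF u" unfolding u by (rule goodF_shift[OF gw])
  have Bgood: "goodF (B i)" for i unfolding Bd by (rule interval_good[OF gu])
  have Blab: "set (labels (B i)) \<subseteq> set (labels u)" for i
    unfolding Bd by (auto simp: interval_set deg_def)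
  have dps: "distinct ps" using sp by (simp add: strict_sorted_iff)
  have gc: "g p = [] \<or> (\<exists>i<k. g p = B i)" for p
    unfolding g_def by (rule gcases) (use len dps k_def in auto)
  have ggood: "\<forall>p. goodF (g p) \<and> (\<forall>l\<in>set (labels (g p)). deg t < l)"
  proof
    fix p
    show "goodF (g p) \<and> (\<forall>l\<in>set (labels (g p)). deg t < l)"
    proof (cases "g p = []")
      case True then show ?thesis by simp
    next
      case False
      then obtain i where "g p = B i" using gc[of p] by blast
      moreover have "\<forall>l\<in>set (labels (B i)). deg t < l" using Blab[of i] Lu by auto
      ultimately show ?thesis using Bgood[of i] by simp
    qed
  qed
  have ga: "graft_at t u cs ps = graft g t"
    unfolding graft_at_def g_def k_def len B_def by (rule refl)
  have Lg: "labels (g p) = concat (map (\<lambda>i. if ps ! i = p then labels (B i) else []) [0..<k])" for p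
    unfolding g_def labels_concat map_map o_def by (intro arg_cong[where f=concat] map_cong) auto
  have Sg: "set (labels (g p)) = (\<Union>i\<in>{..<k}. if ps ! i = p then set (labels (B i)) else {})" for p
    unfolding Lg set_concat set_map set_upt atLeast0LessThan image_image by (rule SUP_cong) auto
  have lg: "length (labels (g p)) = (\<Sum>i<k. if ps ! i = p then length (labels (B i)) else 0)" for p
    unfolding Lg length_concat map_map interv_sum_list_conv_sum_set_nat set_upt atLeast0LessThan
    by (rule sum.cong) auto
  have psr: "ps ! i \<in> {1..Suc (deg t)}" if "i < k" for i
  proof -
    have "i < length ps" using that len k_def by simp
    then show ?thesis using rng nth_mem by blast
  qed
  define A' where "A' = {1..Suc (deg t)}"
  have psA: "ps ! i \<in> A'" if "i < k" for i using psr[OF that] by (simp add: A'_def)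
  have A'i: "A' = insert (Suc (deg t)) {Suc 0..deg t}" by (auto simp: A'_def)
  have A'n: "Suc (deg t) \<notin> {Suc 0..deg t}" by simp
  have GL: "labels (graft g t) = labels (graftF g 0 t) @ labels (g (Suc (deg t)))"
    by (simp add: graft_def)
  note gl2 = graft_labels(2)[of g 0 t]
  have lt: "length (labels t) = deg t" by (simp add: deg_def)
  have setG: "set (labels (graft g t)) = set (labels t) \<union> (\<Union>p\<in>A'. set (labels (g p)))"
    unfolding GL A'i using gl2 lt by auto
  have lenG: "length (labels (graft g t)) = deg t + (\<Sum>p\<in>A'. length (labels (g p)))"
    unfolding GL A'i sum.insert[OF finite_atLeastAtMost A'n] using gl2 lt by simp
  have U1: "(\<Union>p\<in>A'. set (labels (g p))) = (\<Union>i\<in>{..<k}. set (labels (B i)))"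
  proof
    show "(\<Union>p\<in>A'. set (labels (g p))) \<subseteq> (\<Union>i\<in>{..<k}. set (labels (B i)))"
    proof
      fix x assume "x \<in> (\<Union>p\<in>A'. set (labels (g p)))"
      then obtain p i where "i < k" "x \<in> (if ps ! i = p then set (labels (B i)) else {})"
        unfolding Sg by blast
      then show "x \<in> (\<Union>i\<in>{..<k}. set (labels (B i)))" by (cases "ps ! i = p") auto
    qed
    show "(\<Union>i\<in>{..<k}. set (labels (B i))) \<subseteq> (\<Union>p\<in>A'. set (labels (g p)))"
    proof
      fix x assume "x \<in> (\<Union>i\<in>{..<k}. set (labels (B i)))"
      then obtain i where i: "i < k" "x \<in> set (labels (B i))" by blast
      then have "x \<in> set (labels (g (ps ! i)))" unfolding Sg by auto
      then show "x \<in> (\<Union>p\<in>A'. set (labels (g p)))" using psA[OF i(1)] by blast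
    qed
  qed
  have U2: "(\<Union>i\<in>{..<k}. set (labels (B i))) = set (labels u)"
  proof
    show "(\<Union>i\<in>{..<k}. set (labels (B i))) \<subseteq> set (labels u)" using Blab by blast
    show "set (labels u) \<subseteq> (\<Union>i\<in>{..<k}. set (labels (B i)))"
    proof
      fix x assume "x \<in> set (labels u)"
      then obtain j where j: "j < deg u" "x = labels u ! j" by (auto simp: in_set_conv_nth deg_def)
      have "c 0 < Suc j" "Suc j \<le> c k" using c0 ck j du by auto
      then obtain i where i: "i < k" "c i < Suc j" "Suc j \<le> c (Suc i)" using cover by blast
      then have "x \<in> set (labels (B i))" unfolding Bd interval_set using j by auto
      then show "x \<in> (\<Union>i\<in>{..<k}. set (labels (B i)))" using i by blast
    qed
  qed
  have S1: "(\<Sum>p\<in>A'. length (labels (g p))) = (\<Sum>i<k. length (labels (B i)))"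
  proof -
    have "(\<Sum>p\<in>A'. length (labels (g p))) = (\<Sum>i<k. \<Sum>p\<in>A'. if ps ! i = p then length (labels (B i)) else 0)"
      unfolding lg by (rule sum.swap)
    also have "\<dots> = (\<Sum>i<k. length (labels (B i)))"
    proof (rule sum.cong[OF refl])
      fix i assume "i \<in> {..<k}"
      then have "ps ! i \<in> A'" using psA by simp
      then show "(\<Sum>p\<in>A'. if ps ! i = p then length (labels (B i)) else 0) = length (labels (B i))"
        by (simp add: sum.delta' A'_def)
    qed
    finally show ?thesis .
  qed
  have S2: "(\<Sum>i<k. length (labels (B i))) = n"
  proof -
    have "(\<Sum>i<k. length (labels (B i))) = (\<Sum>i<k. c (Suc i) - c i)"
      by (rule sum.cong) (use cle du in \<open>auto simp: Bd intro!: interval_len\<close>)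
    also have "\<dots> = c k - c 0"
    proof -
      have "\<forall>i<k. c i \<le> c (Suc i)" using cm by (simp add: less_imp_le Suc_leI)
      then show ?thesis using telescope[of k c] by blast
    qed
    finally show ?thesis using c0 ck by simp
  qed
  have set_final: "set (labels (graft g t)) = {1..deg t + n}"
  proof -
    have "{1..deg t} \<union> {deg t + 1..deg t + n} = {1..deg t + n}" by auto
    then show ?thesis unfolding setG U1 U2 Lt(1) Lu by simp
  qed
  have len_final: "length (labels (graft g t)) = deg t + n"
    unfolding lenG S1 S2 ..
  have nt: "is_ntree (graft g t)" unfolding is_ntree_def deg_def
    using set_final len_final by (auto intro: card_distinct)
  have "goodF (graft g t)" unfolding graft_def goodF_append
  proof (intro conjI ballI)
    show "goodF (graftF g 0 t)" using graft_good(2)[OF ggood] gt Lt by auto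
    show "goodF (g (Suc (deg t)))" using ggood by blast
    fix x y assume "x \<in> set (graftF g 0 t)" "y \<in> set (g (Suc (deg t)))"
    then have "lab x \<in> set (map lab t)"
      by (metis image_eqI list.set_map map_lab_graftF)
    have ly: "lab y \<in> set (labels (g (Suc (deg t))))" using \<open>y \<in> _\<close> by (rule lab_labels)
    from \<open>lab x \<in> set (map lab t)\<close> obtain x0 where x0: "x0 \<in> set t" "lab x = lab x0" by auto
    then have "lab x \<le> deg t" using lab_labels[OF x0(1)] Lt by auto
    moreover have "deg t < lab y" using ggood ly by blast
    ultimately show "lab x < lab y" by simp
  qed
  then show ?thesis unfolding ga using nt by (simp add: sorted_tree_iff)
qed



lemma supp_single: "supp (single a :: 'a \<Rightarrow> 'k::field) = {a}"
  by (auto simp: supp_def single_def)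

lemma sorted_le_last: fixes xs :: "nat list" shows "sorted_wrt (<) xs \<Longrightarrow> x \<in> set xs \<Longrightarrow> x \<le> last xs"
proof (induct xs)
  case Nil then show ?case by simp
next
  case (Cons a xs)
  show ?case
  proof (cases "xs = []")
    case True then show ?thesis using Cons by simp
  next
    case False
    then have "last xs \<in> set xs" by simp
    then have "a < last xs" using Cons.prems by simp
    show ?thesis
    proof (cases "x = a")
      case True then show ?thesis using \<open>a < last xs\<close> False by simp
    next
      case F2: False
      then have "x \<in> set xs" using Cons.prems by simp
      then show ?thesis using Cons False by simp
    qed
  qed
qed

lemma list_bound_finite:
  "finite {xs :: nat list. sorted_wrt (<) xs \<and> set xs \<subseteq> {0..N}}"
proof (rule finite_subset)
  show "{xs :: nat list. sorted_wrt (<) xs \<and> set xs \<subseteq> {0..N}} \<subseteq> {xs. set xs \<subseteq> {0..N} \<and> length xs \<le> Suc N}"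
  proof
    fix xs :: "nat list" assume "xs \<in> {xs :: nat list. sorted_wrt (<) xs \<and> set xs \<subseteq> {0..N}}"
    then have "sorted_wrt (<) xs" "set xs \<subseteq> {0..N}" by auto
    then have "distinct xs" by (simp add: strict_sorted_iff)
    then have "length xs = card (set xs)" by (simp add: distinct_card)
    also have "\<dots> \<le> card {0..N}" by (rule card_mono) (use \<open>set xs \<subseteq> _\<close> in auto)
    finally show "xs \<in> {xs. set xs \<subseteq> {0..N} \<and> length xs \<le> Suc N}" using \<open>set xs \<subseteq> _\<close> by simp
  qed
  show "finite {xs. set xs \<subseteq> {0..N} \<and> length xs \<le> Suc N}" by (rule finite_lists_length_le) simp
qed

lemma star_supp:
  assumes st: "sorted_tree t" and sw: "sorted_tree w"
  shows "finite (supp (star_tree t w :: tree \<Rightarrow> 'k::field)) \<and> supp (star_tree t w :: tree \<Rightarrow> 'k) \<subseteq> SIinf"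
proof (cases "shift w (deg t) = []")
  case True
  then have "(star_tree t w :: tree \<Rightarrow> 'k) = single t" by (simp add: star_tree_def graft_prod_def)
  then show ?thesis using st by (simp add: supp_single SIinf_def)
next
  case False
  define u where "u = shift w (deg t)"
  define V where "V = {(cs, ps). cuts_ok (deg u) cs \<and> length ps = length cs
                \<and> sorted_wrt (<) ps \<and> set ps \<subseteq> {1..Suc (deg t)}}"
  define G where "G = (\<lambda>(cs, ps). graft_at t u cs ps)"
  have eq: "(star_tree t w :: tree \<Rightarrow> 'k) s = of_nat (card {p \<in> V. G p = s})" for s
  proof -
    have "{(cs, ps). cuts_ok (deg u) cs \<and> length ps = length cs
                \<and> sorted_wrt (<) ps \<and> set ps \<subseteq> {1..Suc (deg t)}
                \<and> graft_at t u cs ps = s} = {p \<in> V. G p = s}"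
      unfolding V_def G_def by (rule set_eqI) (clarsimp split: prod.splits)
    moreover have "(star_tree t w :: tree \<Rightarrow> 'k) s = of_nat (card {(cs, ps). cuts_ok (deg u) cs \<and> length ps = length cs
                \<and> sorted_wrt (<) ps \<and> set ps \<subseteq> {1..Suc (deg t)}
                \<and> graft_at t u cs ps = s})"
      unfolding star_tree_def graft_prod_def u_def using False by (simp only: if_False)
    ultimately show ?thesis by simp
  qed
  have sub: "supp (star_tree t w :: tree \<Rightarrow> 'k) \<subseteq> G ` V"
  proof
    fix s assume "s \<in> supp (star_tree t w :: tree \<Rightarrow> 'k)"
    then have "(of_nat (card {p \<in> V. G p = s}) :: 'k) \<noteq> 0" by (simp add: supp_def eq)
    then have "card {p \<in> V. G p = s} \<noteq> 0" by (metis of_nat_0)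
    then obtain p where "p \<in> V" "G p = s" by (metis (mono_tags, lifting) card.empty empty_Collect_eq)
    then show "s \<in> G ` V" by blast
  qed
  have img: "G ` V \<subseteq> SIinf"
  proof
    fix s assume "s \<in> G ` V"
    then obtain cs ps where "(cs, ps) \<in> V" "s = graft_at t u cs ps" unfolding G_def by auto
    then show "s \<in> SIinf" using star_graft_sorted[OF st sw u_def] unfolding V_def SIinf_def by simp
  qed
  have "V \<subseteq> {xs :: nat list. sorted_wrt (<) xs \<and> set xs \<subseteq> {0..deg u}} \<times> {xs :: nat list. sorted_wrt (<) xs \<and> set xs \<subseteq> {0..Suc (deg t)}}"
  proof (rule subsetI)
    fix pr assume "pr \<in> V"
    obtain cs ps where pr: "pr = (cs, ps)" by (cases pr)
    from \<open>pr \<in> V\<close> have h: "cuts_ok (deg u) cs" "sorted_wrt (<) ps" "set ps \<subseteq> {1..Suc (deg t)}" by (auto simp: V_def pr)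
    then have sc: "sorted_wrt (<) cs" "last cs = deg u" by (auto simp: cuts_ok_def)
    have "set cs \<subseteq> {0..deg u}" using sorted_le_last[OF sc(1)] sc(2) by auto
    then show "pr \<in> {xs :: nat list. sorted_wrt (<) xs \<and> set xs \<subseteq> {0..deg u}} \<times> {xs :: nat list. sorted_wrt (<) xs \<and> set xs \<subseteq> {0..Suc (deg t)}}"
      using sc h pr by auto
  qed
  then have "finite V" by (rule finite_subset) (intro finite_cartesian_product list_bound_finite)
  then show ?thesis using sub img by (meson finite_imageI finite_subset order_trans)
qed

lemma supp_bilin: "supp (bilin F x y) \<subseteq> (\<Union>a\<in>supp x. \<Union>b\<in>supp y. supp (F a b))"
proof
  fix s assume "s \<in> supp (bilin F x y)"
  then have "(\<Sum>a\<in>supp x. \<Sum>b\<in>supp y. x a * y b * F a b s) \<noteq> 0" by (simp add: supp_def bilin_def)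
  then obtain a where a: "a \<in> supp x" "(\<Sum>b\<in>supp y. x a * y b * F a b s) \<noteq> 0"
    by (rule sum.not_neutral_contains_not_neutral)
  obtain b where b: "b \<in> supp y" "x a * y b * F a b s \<noteq> 0"
    using sum.not_neutral_contains_not_neutral[OF a(2)] by blast
  then have "F a b s \<noteq> 0" by auto
  then show "s \<in> (\<Union>a\<in>supp x. \<Union>b\<in>supp y. supp (F a b))" using a(1) b(1) by (auto simp: supp_def)
qed

lemma supp_lin: "supp (lin F x) \<subseteq> (\<Union>a\<in>supp x. supp (F a))"
proof
  fix s assume "s \<in> supp (lin F x)"
  then have "(\<Sum>a\<in>supp x. x a * F a s) \<noteq> 0" by (simp add: supp_def lin_def)
  then obtain a where a: "a \<in> supp x" "x a * F a s \<noteq> 0"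
    by (rule sum.not_neutral_contains_not_neutral)
  then show "s \<in> (\<Union>a\<in>supp x. supp (F a))" by (auto simp: supp_def)
qed

lemma bilin_span:
  assumes "x \<in> span_of A" "y \<in> span_of A2"
    and H: "\<And>a b. a \<in> A \<Longrightarrow> b \<in> A2 \<Longrightarrow> finite (supp (F a b)) \<and> supp (F a b) \<subseteq> C"
  shows "bilin F x y \<in> span_of C"
proof -
  have fx: "finite (supp x)" "supp x \<subseteq> A" and fy: "finite (supp y)" "supp y \<subseteq> A2"
    using assms(1,2) by (auto simp: span_of_def)
  have "finite (\<Union>a\<in>supp x. \<Union>b\<in>supp y. supp (F a b))" using fx fy H by blast
  moreover have "(\<Union>a\<in>supp x. \<Union>b\<in>supp y. supp (F a b)) \<subseteq> C" using fx fy H by blast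
  ultimately show ?thesis using supp_bilin[of F x y] unfolding span_of_def by (auto intro: finite_subset)
qed

lemma lin_span:
  assumes "x \<in> span_of A"
    and H: "\<And>a. a \<in> A \<Longrightarrow> finite (supp (F a)) \<and> supp (F a) \<subseteq> C"
  shows "lin F x \<in> span_of C"
proof -
  have fx: "finite (supp x)" "supp x \<subseteq> A" using assms(1) by (auto simp: span_of_def)
  have "finite (\<Union>a\<in>supp x. supp (F a))" using fx H by blast
  moreover have "(\<Union>a\<in>supp x. supp (F a)) \<subseteq> C" using fx H by blast
  ultimately show ?thesis using supp_lin[of F x] unfolding span_of_def by (auto intro: finite_subset)
qed

lemma delta_supp:
  assumes "sorted_tree t"
  shows "finite (supp (delta_tree t :: _ \<Rightarrow> 'k::field)) \<and> supp (delta_tree t :: _ \<Rightarrow> 'k) \<subseteq> SIinf \<times> SIinf"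
proof -
  let ?X = "\<lambda>k. (std (interval t 1 k), std (interval t (Suc k) (deg t)))"
  have "supp (delta_tree t :: _ \<Rightarrow> 'k) \<subseteq> ?X ` {0..deg t}"
  proof
    fix pq assume "pq \<in> supp (delta_tree t :: _ \<Rightarrow> 'k)"
    then have "(\<Sum>k\<in>{0..deg t}. (single (?X k) pq :: 'k)) \<noteq> 0" by (simp add: supp_def delta_tree_def)
    then obtain k where "k \<in> {0..deg t}" "(single (?X k) pq :: 'k) \<noteq> 0"
      by (rule sum.not_neutral_contains_not_neutral)
    then show "pq \<in> ?X ` {0..deg t}" by (auto simp: single_def split: if_splits)
  qed
  moreover have "?X ` {0..deg t} \<subseteq> SIinf \<times> SIinf"
    using interval_sorted[OF assms] by (auto simp: SIinf_def)
  ultimately show ?thesis by (meson finite_atLeastAtMost finite_imageI finite_subset order_trans)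
qed

theorem proposition4p5:
  fixes x y :: "tree \<Rightarrow> 'k::field"
  shows "SIinf \<subseteq> Tinf
    \<and> (single [] :: tree \<Rightarrow> 'k) \<in> span_of SIinf
    \<and> (x \<in> span_of SIinf \<longrightarrow> y \<in> span_of SIinf \<longrightarrow>
          star x y \<in> span_of SIinf
        \<and> slash x y \<in> span_of SIinf
        \<and> Delta_s x \<in> span_of (SIinf \<times> SIinf))"
proof (intro conjI impI)
  show "SIinf \<subseteq> Tinf" by (auto simp: SIinf_def Tinf_def sorted_tree_def increasing_tree_def)
  have "sorted_tree []" by (simp add: sorted_tree_iff is_ntree_def deg_def)
  then show "(single [] :: tree \<Rightarrow> 'k) \<in> span_of SIinf"
    by (simp add: span_of_def supp_single SIinf_def)
  assume hx: "x \<in> span_of SIinf" and hy: "y \<in> span_of SIinf"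
  show "star x y \<in> span_of SIinf" unfolding star_def
    by (rule bilin_span[OF hx hy], rule star_supp) (simp_all add: SIinf_def)
  show "slash x y \<in> span_of SIinf" unfolding slash_def
    by (rule bilin_span[OF hx hy]) (auto simp: SIinf_def slash_tree_def supp_single intro: slash_sorted)
  show "Delta_s x \<in> span_of (SIinf \<times> SIinf)" unfolding Delta_s_def
    by (rule lin_span[OF hx], rule delta_supp) (simp_all add: SIinf_def)
qed

end
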